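(* Let $n, M \ge 2$ be integers and let $W_1, \dots, W_M \in \mathbb{R}^{n \times n}$ be weighted adjacency matrices (nonnegative entries) of a time-evolving graph on the fixed vertex set $\{v_1, \dots, v_n\}$, such that every row of each $W_t$ has positive sum. Let $S_t = D_t^{-1} W_t$, where $D_t = \mathrm{diag}\big(\sum_j (W_t)_{1j}, \dots, \sum_j (W_t)_{nj}\big)$, be the row-stochastic transition matrices. Let $\boldsymbol{\mu}_1 = \frac{1}{n}\mathbb{1}$ be the uniform density and define $\boldsymbol{\mu}_{t+1} = S_t^\top \boldsymbol{\mu}_t$ for $t = 1, \dots, M-1$; assume all entries of $\boldsymbol{\mu}_t$ are strictly positive for all $t \in \{1, \dots, M\}$, and let $D_{\mu_t} = \mathrm{diag}(\boldsymbol{\mu}_t)$. Define $K_t = S_t$ and $T_t = D_{\mu_{t+1}}^{-1} S_t^\top D_{\mu_t}$ for $t = 1, \dots, M-1$, and let $\mathbf{C} \in \mathbb{R}^{nM \times nM}$ be the block matrix with $n \times n$ blocks $\mathbf{C}_{[s,r]}$ ($s, r \in \{1,\dots,M\}$) given by: $\mathbf{C}_{[1,2]} = K_1$; for $2 \le t \le M-1$, $\mathbf{C}_{[t,t-1]} = \tfrac{1}{2} T_{t-1}$ and $\mathbf{C}_{[t,t+1]} = \tfrac12 K_t$; $\mathbf{C}_{[M,M-1]} = T_{M-1}$; and all other blocks zero. Then: (i) all eigenvalues of $\mathbf{C}$ are real and contained in the interval $[-1, 1]$; (ii) the spectrum of $\mathbf{C}$ is symmetric about zero, i.e., if $\lambda$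 is an eigenvalue of $\mathbf{C}$ then so is $-\lambda$.
   Context: Equivalently, $\mathbf{C} = \mathbf{B}^{-1}\mathbf{A}$, where $\mathbf{A}$ is the symmetric block-tridiagonal matrix with zero diagonal blocks, super-diagonal blocks $C_{t(t+1)} = D_{\mu_t} S_t$ and sub-diagonal blocks $C_{(t+1)t} = C_{t(t+1)}^\top$, and $\mathbf{B}$ is block diagonal with blocks $D_{\mu_1}, 2D_{\mu_2}, \dots, 2D_{\mu_{M-1}}, D_{\mu_M}$. This matrix arises from a multiview canonical correlation analysis maximizing $\sum_{t=1}^{M-1} \mathbf{f}_t^\top C_{t(t+1)} \mathbf{f}_{t+1}$ subject to $\mathbf{f}_t^\top D_{\mu_t} \mathbf{f}_t = 1$. *)

theory Defs
  imports "Jordan_Normal_Form.Char_Poly"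
begin

definition rdeg :: "nat \<Rightarrow> real mat \<Rightarrow> nat \<Rightarrow> real" where
  "rdeg n W i = (\<Sum>j<n. W $$ (i, j))"

definition trans_mat :: "nat \<Rightarrow> real mat \<Rightarrow> real mat" where
  "trans_mat n W = mat n n (\<lambda>(i, j). W $$ (i, j) / rdeg n W i)"

(* densities mu_t, indexed as in the paper from t = 1; mu_1 = 1/n * ones,
   mu_{t+1} = S_t^T mu_t.  The value at index 0 is an unused dummy. *)
fun mu :: "nat \<Rightarrow> (nat \<Rightarrow> real mat) \<Rightarrow> nat \<Rightarrow> real vec" where
  "mu n W 0 = vec n (\<lambda>_. 1 / real n)"
| "mu n W (Suc 0) = vec n (\<lambda>_. 1 / real n)"
| "mu n W (Suc (Suc t)) = transpose_mat (trans_mat n (W (Suc t))) *\<^sub>v mu n W (Suc t)"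

definition Kmat :: "nat \<Rightarrow> (nat \<Rightarrow> real mat) \<Rightarrow> nat \<Rightarrow> real mat" where
  "Kmat n W t = trans_mat n (W t)"

definition Tmat :: "nat \<Rightarrow> (nat \<Rightarrow> real mat) \<Rightarrow> nat \<Rightarrow> real mat" where
  "Tmat n W t = mat n n (\<lambda>(i, j).
     (1 / (mu n W (Suc t) $ i)) * (trans_mat n (W t) $$ (j, i)) * (mu n W t $ j))"

(* The nM x nM block matrix C.  Global row index a corresponds to block
   s = a div n + 1 (1-based, as in the paper) and in-block row a mod n. *)
definition Cmat :: "nat \<Rightarrow> nat \<Rightarrow> (nat \<Rightarrow> real mat) \<Rightarrow> real mat" where
  "Cmat n M W = mat (n * M) (n * M) (\<lambda>(a, b).
     let s = a div n + 1; i = a mod n; r = b div n + 1; j = b mod n in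
     if s = 1 \<and> r = 2 then Kmat n W 1 $$ (i, j)
     else if 2 \<le> s \<and> s \<le> M - 1 \<and> r = s - 1 then Tmat n W (s - 1) $$ (i, j) / 2
     else if 2 \<le> s \<and> s \<le> M - 1 \<and> r = s + 1 then Kmat n W s $$ (i, j) / 2
     else if s = M \<and> r = M - 1 then Tmat n W (M - 1) $$ (i, j)
     else 0)"

end

theory Submission
  imports Defs
begin

definition cb :: "nat \<Rightarrow> nat \<Rightarrow> (nat \<Rightarrow> real mat) \<Rightarrow> nat \<Rightarrow> nat \<Rightarrow> nat \<Rightarrow> nat \<Rightarrow> real" where
  "cb n M W s r i j =
     (if s = 1 \<and> r = 2 then Kmat n W 1 $$ (i, j)
     else if 2 \<le> s \<and> s \<le> M - 1 \<and> r = s - 1 then Tmat n W (s - 1) $$ (i, j) / 2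
     else if 2 \<le> s \<and> s \<le> M - 1 \<and> r = s + 1 then Kmat n W s $$ (i, j) / 2
     else if s = M \<and> r = M - 1 then Tmat n W (M - 1) $$ (i, j)
     else 0)"

lemma Cmat_idx: "a < n * M \<Longrightarrow> c < n * M \<Longrightarrow>
  Cmat n M W $$ (a, c) = cb n M W (a div n + 1) (c div n + 1) (a mod n) (c mod n)"
  unfolding Cmat_def cb_def Let_def by simp

lemma Cmat_dim[simp]: "dim_row (Cmat n M W) = n * M" "dim_col (Cmat n M W) = n * M"
  unfolding Cmat_def by auto

lemma dim_mu[simp]: "dim_vec (mu n W t) = n"
  by (induction n W t rule: mu.induct) (auto simp: trans_mat_def)

lemma mu_rec: "1 \<le> t \<Longrightarrow> i < n \<Longrightarrow>
   mu n W (Suc t) $ i = (\<Sum>j<n. trans_mat n (W t) $$ (j, i) * mu n W t $ j)"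
proof -
  assume "1 \<le> t" "i < n"
  then obtain t' where t: "t = Suc t'" by (cases t) auto
  show ?thesis using \<open>i < n\<close> unfolding t
    by (simp add: trans_mat_def scalar_prod_def lessThan_atLeast0)
qed

lemma sum_blocks: fixes n M :: nat and f :: "nat \<Rightarrow> 'a::comm_monoid_add" shows "(\<Sum>c<n * M. f c) = (\<Sum>r<M. \<Sum>j<n. f (r * n + j))"
proof (induction M)
  case 0 then show ?case by simp
next
  case (Suc M)
  have "{..<n * Suc M} = {..<n * M} \<union> {n * M..<n * M + n}" by auto
  then have "(\<Sum>c<n * Suc M. f c) = (\<Sum>c<n * M. f c) + (\<Sum>c\<in>{n * M..<n * M + n}. f c)"
    by (metis (no_types) finite_atLeastLessThan finite_lessThan ivl_disj_int_one(2) lessThan_atLeast0 sum.union_disjoint)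
  also have "(\<Sum>c\<in>{n * M..<n * M + n}. f c) = (\<Sum>j<n. f (M * n + j))"
  proof -
    have "(\<Sum>c\<in>{n * M..<n * M + n}. f c) = (\<Sum>j\<in>{0..<n}. f (j + n * M))"
      using sum.shift_bounds_nat_ivl[of f 0 "n*M" n] by (simp add: add.commute)
    then show ?thesis by (simp add: lessThan_atLeast0 add.commute mult.commute)
  qed
  finally show ?case using Suc by simp
qed

locale P1 =
  fixes n M :: nat and W :: "nat \<Rightarrow> real mat"
  assumes n2: "n \<ge> 2" and M2: "M \<ge> 2"
    and carr: "\<And>t. t \<in> {1..M} \<Longrightarrow> W t \<in> carrier_mat n n"
    and Wnn: "\<And>t i j. t \<in> {1..M} \<Longrightarrow> i < n \<Longrightarrow> j < n \<Longrightarrow> W t $$ (i, j) \<ge> 0"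
    and rpos: "\<And>t i. t \<in> {1..M} \<Longrightarrow> i < n \<Longrightarrow> rdeg n (W t) i > 0"
    and mupos: "\<And>t i. t \<in> {1..M} \<Longrightarrow> i < n \<Longrightarrow> mu n W t $ i > 0"
begin

abbreviation "S t \<equiv> trans_mat n (W t)"

lemma S_idx: "i < n \<Longrightarrow> j < n \<Longrightarrow> S t $$ (i, j) = W t $$ (i, j) / rdeg n (W t) i"
  by (simp add: trans_mat_def)

lemma S_nn: "t \<in> {1..M} \<Longrightarrow> i < n \<Longrightarrow> j < n \<Longrightarrow> S t $$ (i, j) \<ge> 0"
proof -
  assume a: "t \<in> {1..M}" "i < n" "j < n"
  show ?thesis using Wnn[OF a] rpos[OF a(1,2)] by (simp add: S_idx[OF a(2,3)])
qed

lemma S_row: "t \<in> {1..M} \<Longrightarrow> i < n \<Longrightarrow> (\<Sum>j<n. S t $$ (i, j)) = 1"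
proof -
  assume a: "t \<in> {1..M}" "i < n"
  have "(\<Sum>j<n. S t $$ (i, j)) = (\<Sum>j<n. W t $$ (i, j)) / rdeg n (W t) i"
    using a by (simp add: S_idx sum_divide_distrib)
  also have "\<dots> = 1" using rpos[OF a] by (simp add: rdeg_def)
  finally show ?thesis .
qed

lemma T_idx: "i < n \<Longrightarrow> j < n \<Longrightarrow>
  Tmat n W t $$ (i, j) = (1 / (mu n W (Suc t) $ i)) * (S t $$ (j, i)) * (mu n W t $ j)"
  by (simp add: Tmat_def)

lemma T_nn: "t \<in> {1..M-1} \<Longrightarrow> i < n \<Longrightarrow> j < n \<Longrightarrow> Tmat n W t $$ (i, j) \<ge> 0"
proof -
  assume a: "t \<in> {1..M-1}" "i < n" "j < n"
  have "mu n W (Suc t) $ i > 0" "mu n W t $ j > 0" "S t $$ (j, i) \<ge> 0"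
    using a mupos S_nn by auto
  then show ?thesis using a by (simp add: T_idx)
qed

lemma T_row: "t \<in> {1..M-1} \<Longrightarrow> i < n \<Longrightarrow> (\<Sum>j<n. Tmat n W t $$ (i, j)) = 1"
proof -
  assume a: "t \<in> {1..M-1}" "i < n"
  have p: "mu n W (Suc t) $ i > 0" using a mupos by auto
  have "(\<Sum>j<n. Tmat n W t $$ (i, j)) = (1 / (mu n W (Suc t) $ i)) * (\<Sum>j<n. S t $$ (j, i) * mu n W t $ j)"
    using a by (simp add: T_idx sum_distrib_left mult.assoc)
  also have "\<dots> = 1" using mu_rec[of t i n W] a p by simp
  finally show ?thesis .
qed

definition wt :: "nat \<Rightarrow> nat \<Rightarrow> real" where
  "wt s i = (if s = 1 \<or> s = M then 1 else 2) * mu n W s $ i"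

lemma wt_pos: "s \<in> {1..M} \<Longrightarrow> i < n \<Longrightarrow> wt s i > 0"
  using mupos by (simp add: wt_def)

lemma cb_nz: "cb n M W s r i j \<noteq> 0 \<Longrightarrow> s \<ge> 1 \<Longrightarrow> r = s + 1 \<or> s = r + 1"
  unfolding cb_def using M2 by (auto split: if_splits)

lemma cb_nn: "s \<in> {1..M} \<Longrightarrow> r \<in> {1..M} \<Longrightarrow> i < n \<Longrightarrow> j < n \<Longrightarrow> cb n M W s r i j \<ge> 0"
  unfolding cb_def Kmat_def using S_nn T_nn M2 by auto

lemma sym_step: "s \<in> {1..M-1} \<Longrightarrow> i < n \<Longrightarrow> j < n \<Longrightarrow>
   wt s i * cb n M W s (s+1) i j = wt (s+1) j * cb n M W (s+1) s j i"
proof -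
  assume a: "s \<in> {1..M-1}" "i < n" "j < n"
  have p: "mu n W (Suc s) $ j > 0" using a mupos by auto
  have l: "wt s i * cb n M W s (s+1) i j = mu n W s $ i * S s $$ (i, j)"
    using a M2 by (auto simp: wt_def cb_def Kmat_def)
  have r: "wt (s+1) j * cb n M W (s+1) s j i = mu n W (Suc s) $ j * Tmat n W s $$ (j, i)"
    using a M2 by (auto simp: wt_def cb_def)
  show ?thesis using l r p a by (simp add: T_idx)
qed

lemma cb_sym: "s \<in> {1..M} \<Longrightarrow> r \<in> {1..M} \<Longrightarrow> i < n \<Longrightarrow> j < n \<Longrightarrow>
   wt s i * cb n M W s r i j = wt r j * cb n M W r s j i"
proof -
  assume a: "s \<in> {1..M}" "r \<in> {1..M}" "i < n" "j < n"
  consider "r = s + 1" | "s = r + 1" | "r \<noteq> s + 1 \<and> s \<noteq> r + 1" by blast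
  then show ?thesis
  proof cases
    case 1 then show ?thesis using sym_step[of s i j] a by auto
  next
    case 2 then show ?thesis using sym_step[of r j i] a by auto
  next
    case 3
    then have "cb n M W s r i j = 0" "cb n M W r s j i = 0" using cb_nz a by force+
    then show ?thesis by simp
  qed
qed

lemma cb_row: "s \<in> {1..M} \<Longrightarrow> i < n \<Longrightarrow> (\<Sum>r<M. \<Sum>j<n. cb n M W s (r+1) i j) = 1"
proof -
  assume a: "s \<in> {1..M}" "i < n"
  consider "s = 1" | "2 \<le> s \<and> s \<le> M - 1" | "s = M" using a M2 by force
  then show ?thesis
  proof cases
    case 1
    have "\<forall>r<M. (\<Sum>j<n. cb n M W s (r+1) i j) = (if r = 1 then 1 else 0)"
      using 1 M2 a S_row[of 1 i] by (auto simp: cb_def Kmat_def)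
    then have "(\<Sum>r<M. \<Sum>j<n. cb n M W s (r+1) i j) = (\<Sum>r<M. if r = 1 then 1 else 0)"
      by (intro sum.cong) auto
    then show ?thesis using M2 by simp
  next
    case 2
    have "\<forall>r<M. (\<Sum>j<n. cb n M W s (r+1) i j) =
        (if r = s - 2 then 1/2 else 0) + (if r = s then 1/2 else 0)"
    proof (intro allI impI)
      fix r assume r: "r < M"
      show "(\<Sum>j<n. cb n M W s (r+1) i j) =
        (if r = s - 2 then 1/2 else 0) + (if r = s then 1/2 else 0)"
      proof (cases "r = s - 2")
        case True
        have eq: "r + 1 = s - 1" using True 2 by auto
        then have "(\<Sum>j<n. cb n M W s (r+1) i j) = (\<Sum>j<n. Tmat n W (s-1) $$ (i, j)) / 2"
          using 2 by (simp add: cb_def sum_divide_distrib)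
        also have "\<dots> = 1/2" using T_row[of "s-1" i] 2 a by force
        finally show ?thesis using True 2 by auto
      next
        case F: False
        show ?thesis
        proof (cases "r = s")
          case True
          have e: "\<And>j. cb n M W s (r+1) i j = S s $$ (i, j) / 2"
            using True 2 unfolding cb_def Kmat_def by auto
          have "(\<Sum>j<n. cb n M W s (r+1) i j) = (\<Sum>j<n. S s $$ (i, j)) / 2"
            unfolding e by (simp add: sum_divide_distrib)
          also have "\<dots> = 1/2" using S_row[of s i] 2 a by auto
          finally show ?thesis using True 2 by auto
        next
          case False
          then have "\<forall>j. cb n M W s (r+1) i j = 0" using F 2 by (auto simp: cb_def)
          then show ?thesis using F False by simp
        qed
      qed
    qed
    then have "(\<Sum>r<M. \<Sum>j<n. cb n M W s (r+1) i j) =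
       (\<Sum>r<M. (if r = s - 2 then 1/2 else 0) + (if r = s then 1/2 else (0::real)))"
      by (intro sum.cong) auto
    also have "\<dots> = 1" using 2 M2 by (simp add: sum.distrib) arith
    finally show ?thesis .
  next
    case 3
    have "\<forall>r<M. (\<Sum>j<n. cb n M W s (r+1) i j) = (if r = M - 2 then 1 else 0)"
    proof (intro allI impI)
      fix r assume r: "r < M"
      show "(\<Sum>j<n. cb n M W s (r+1) i j) = (if r = M - 2 then 1 else 0)"
      proof (cases "r = M - 2")
        case True
        have e: "\<And>j. cb n M W s (r+1) i j = Tmat n W (M-1) $$ (i, j)"
          using True 3 M2 unfolding cb_def by auto
        have "(\<Sum>j<n. cb n M W s (r+1) i j) = (\<Sum>j<n. Tmat n W (M-1) $$ (i, j))"
          unfolding e ..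
        also have "\<dots> = 1" using T_row[of "M-1" i] M2 a by auto
        finally show ?thesis using True by auto
      next
        case False
        then have "\<forall>j. cb n M W s (r+1) i j = 0" using 3 M2 by (auto simp: cb_def)
        then show ?thesis using False by simp
      qed
    qed
    then have "(\<Sum>r<M. \<Sum>j<n. cb n M W s (r+1) i j) = (\<Sum>r<M. if r = M - 2 then 1 else 0)"
      by (intro sum.cong) auto
    then show ?thesis using M2 by simp
  qed
qed

abbreviation "C \<equiv> Cmat n M W"
abbreviation "N \<equiv> n * M"

definition bw :: "nat \<Rightarrow> real" where "bw a = wt (a div n + 1) (a mod n)"

lemma n0: "n > 0" using n2 by auto

lemma blk: "a < N \<Longrightarrow> a div n + 1 \<in> {1..M} \<and> a mod n < n"
  using n0 by (auto simp: Suc_le_eq div_less_iff_less_mult mult.commute)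

lemma C_nn: "a < N \<Longrightarrow> c < N \<Longrightarrow> C $$ (a, c) \<ge> 0"
  using Cmat_idx cb_nn blk by simp

lemma C_sym: "a < N \<Longrightarrow> c < N \<Longrightarrow> bw a * C $$ (a, c) = bw c * C $$ (c, a)"
  using Cmat_idx cb_sym blk by (simp add: bw_def)

lemma bw_pos: "a < N \<Longrightarrow> bw a > 0"
  using wt_pos blk by (simp add: bw_def)

lemma C_nz: "a < N \<Longrightarrow> c < N \<Longrightarrow> C $$ (a, c) \<noteq> 0 \<Longrightarrow>
   c div n = a div n + 1 \<or> a div n = c div n + 1"
  using Cmat_idx cb_nz[of a] by (metis add_right_cancel cb_nz le_add2)

lemma C_row: "a < N \<Longrightarrow> (\<Sum>c<N. C $$ (a, c)) = 1"
proof -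
  assume a: "a < N"
  have "(\<Sum>c<N. C $$ (a, c)) = (\<Sum>r<M. \<Sum>j<n. C $$ (a, r * n + j))"
    by (rule sum_blocks)
  also have "\<dots> = (\<Sum>r<M. \<Sum>j<n. cb n M W (a div n + 1) (r + 1) (a mod n) j)"
  proof (intro sum.cong refl)
    fix r j assume r: "r \<in> {..<M}" and j: "j \<in> {..<n}"
    have "r * n + j < N"
    proof -
      have "r * n + j < r * n + n" using j by simp
      also have "\<dots> = (r + 1) * n" by simp
      also have "\<dots> \<le> M * n" using r by (intro mult_right_mono) auto
      finally show ?thesis by (simp add: mult.commute)
    qed
    then show "C $$ (a, r * n + j) = cb n M W (a div n + 1) (r + 1) (a mod n) j"
      using Cmat_idx a j n0 by simp
  qed
  also have "\<dots> = 1" using cb_row blk a by blast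
  finally show ?thesis .
qed


abbreviation "Cc \<equiv> map_mat complex_of_real C"

lemma ev_eq: assumes v: "v \<in> carrier_vec N" and e: "Cc *\<^sub>v v = l \<cdot>\<^sub>v v" and a: "a < N"
  shows "(\<Sum>c<N. complex_of_real (C $$ (a, c)) * v $ c) = l * v $ a"
proof -
  have "(Cc *\<^sub>v v) $ a = (l \<cdot>\<^sub>v v) $ a" using e by simp
  then show ?thesis using v a by (simp add: scalar_prod_def lessThan_atLeast0)
qed

lemma real_ev: assumes v: "v \<in> carrier_vec N" "v \<noteq> 0\<^sub>v N" and e: "Cc *\<^sub>v v = l \<cdot>\<^sub>v v"
  shows "Im l = 0"
proof -
  define q where "q = (\<Sum>a<N. \<Sum>c<N. cnj (v $ a) * complex_of_real (bw a * C $$ (a, c)) * v $ c)"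
  define R where "R = (\<Sum>a<N. bw a * (cmod (v $ a))^2)"
  have "q = (\<Sum>a<N. cnj (v $ a) * complex_of_real (bw a) * (\<Sum>c<N. complex_of_real (C $$ (a, c)) * v $ c))"
    unfolding q_def by (simp add: sum_distrib_left mult.assoc mult.left_commute)
  also have "\<dots> = (\<Sum>a<N. cnj (v $ a) * complex_of_real (bw a) * (l * v $ a))"
    using ev_eq[OF v(1) e] by simp
  also have "\<dots> = l * complex_of_real R"
  proof -
    have pw: "cnj (v $ a) * complex_of_real (bw a) * (l * v $ a) = l * complex_of_real (bw a * (cmod (v $ a))^2)" for a
    proof -
      have "complex_of_real ((cmod (v $ a))^2) = v $ a * cnj (v $ a)"
        using complex_norm_square[of "v $ a"] by simp
      then show ?thesis by (simp add: mult_ac)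
    qed
    show ?thesis unfolding R_def of_real_sum sum_distrib_left by (rule sum.cong[OF refl pw])
  qed
  finally have q: "q = l * complex_of_real R" .
  have "cnj q = (\<Sum>a<N. \<Sum>c<N. v $ a * complex_of_real (bw a * C $$ (a, c)) * cnj (v $ c))"
    unfolding q_def by simp
  also have "\<dots> = (\<Sum>a<N. \<Sum>c<N. v $ a * complex_of_real (bw c * C $$ (c, a)) * cnj (v $ c))"
    using C_sym by (intro sum.cong refl) simp
  also have "\<dots> = q" unfolding q_def by (subst sum.swap) (simp add: mult_ac)
  finally have "cnj q = q" .
  then have iq: "Im q = 0" by (metis complex_cnj_cancel_iff Reals_cnj_iff complex_is_Real_iff)
  obtain a where a: "a < N" "v $ a \<noteq> 0" using v
    by (metis carrier_vecD eq_vecI index_zero_vec(1,2))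
  have "R > 0" unfolding R_def
  proof (rule sum_pos2[of _ a])
    show "bw a * (cmod (v $ a))\<^sup>2 > 0" using a bw_pos by simp
    show "\<And>i. i \<in> {..<N} \<Longrightarrow> 0 \<le> bw i * (cmod (v $ i))\<^sup>2" using bw_pos
      by (simp add: less_imp_le)
  qed (use a in auto)
  then show ?thesis using iq q by simp
qed

lemma abs_ev: assumes v: "v \<in> carrier_vec N" "v \<noteq> 0\<^sub>v N" and e: "Cc *\<^sub>v v = l \<cdot>\<^sub>v v"
  shows "cmod l \<le> 1"
proof -
  define m where "m = Max ((\<lambda>a. cmod (v $ a)) ` {..<N})"
  have N0: "N > 0" using n0 M2 by simp
  obtain a0 where a0: "a0 < N" "cmod (v $ a0) = m"
    using Max_in[of "(\<lambda>a. cmod (v $ a)) ` {..<N}"] N0 unfolding m_def by fastforce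
  have mx: "\<And>c. c < N \<Longrightarrow> cmod (v $ c) \<le> m" unfolding m_def by simp
  obtain a where a: "a < N" "v $ a \<noteq> 0" using v
    by (metis carrier_vecD eq_vecI index_zero_vec(1,2))
  have mpos: "m > 0" using mx[OF a(1)] a(2) by (meson less_le_trans zero_less_norm_iff)
  have "cmod l * m = cmod (l * v $ a0)" using a0 by (simp add: norm_mult)
  also have "\<dots> = cmod (\<Sum>c<N. complex_of_real (C $$ (a0, c)) * v $ c)" using ev_eq[OF v(1) e a0(1)] by simp
  also have "\<dots> \<le> (\<Sum>c<N. cmod (complex_of_real (C $$ (a0, c)) * v $ c))" by (rule norm_sum)
  also have "\<dots> \<le> (\<Sum>c<N. C $$ (a0, c) * m)"
  proof (rule sum_mono)
    fix c assume c: "c \<in> {..<N}"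
    have "cmod (complex_of_real (C $$ (a0, c)) * v $ c) = C $$ (a0, c) * cmod (v $ c)"
      using C_nn[OF a0(1)] c by (simp add: norm_mult)
    also have "\<dots> \<le> C $$ (a0, c) * m" using C_nn[OF a0(1)] c mx by (simp add: mult_left_mono)
    finally show "cmod (complex_of_real (C $$ (a0, c)) * v $ c) \<le> C $$ (a0, c) * m" .
  qed
  also have "\<dots> = m" using C_row[OF a0(1)] by (simp add: sum_distrib_right[symmetric])
  finally show ?thesis using mpos by simp
qed

lemma neg_ev: assumes v: "v \<in> carrier_vec N" "v \<noteq> 0\<^sub>v N" and e: "Cc *\<^sub>v v = l \<cdot>\<^sub>v v"
  shows "eigenvalue Cc (- l)"
proof -
  define w where "w = vec N (\<lambda>a. (-1) ^ (a div n) * v $ a)"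
  have wc: "w \<in> carrier_vec N" unfolding w_def by simp
  obtain a where a: "a < N" "v $ a \<noteq> 0" using v
    by (metis carrier_vecD eq_vecI index_zero_vec(1,2))
  have wnz: "w \<noteq> 0\<^sub>v N"
  proof
    assume "w = 0\<^sub>v N"
    then have "w $ a = 0" using a by simp
    then show False using a unfolding w_def by simp
  qed
  have "Cc *\<^sub>v w = (- l) \<cdot>\<^sub>v w"
  proof (rule eq_vecI)
    show "dim_vec (Cc *\<^sub>v w) = dim_vec (- l \<cdot>\<^sub>v w)" unfolding w_def by simp
    fix a assume "a < dim_vec (- l \<cdot>\<^sub>v w)"
    then have a: "a < N" unfolding w_def by simp
    have "(Cc *\<^sub>v w) $ a = (\<Sum>c<N. complex_of_real (C $$ (a, c)) * w $ c)"
      using a unfolding w_def by (simp add: scalar_prod_def lessThan_atLeast0)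
    also have "\<dots> = (\<Sum>c<N. - ((-1) ^ (a div n)) * (complex_of_real (C $$ (a, c)) * v $ c))"
    proof (rule sum.cong[OF refl])
      fix c assume c: "c \<in> {..<N}"
      show "complex_of_real (C $$ (a, c)) * w $ c = - ((-1) ^ (a div n)) * (complex_of_real (C $$ (a, c)) * v $ c)"
      proof (cases "C $$ (a, c) = 0")
        case True then show ?thesis by simp
      next
        case False
        then have "c div n = a div n + 1 \<or> a div n = c div n + 1" using C_nz a c by auto
        then have "(-1::complex) ^ (c div n) = - ((-1) ^ (a div n))" by auto
        then show ?thesis using c unfolding w_def by simp
      qed
    qed
    also have "\<dots> = - ((-1) ^ (a div n)) * (l * v $ a)"
      using ev_eq[OF v(1) e a] by (simp add: sum_negf sum_distrib_left[symmetric])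
    also have "\<dots> = (- l \<cdot>\<^sub>v w) $ a" using a unfolding w_def by simp
    finally show "(Cc *\<^sub>v w) $ a = (- l \<cdot>\<^sub>v w) $ a" .
  qed
  then show ?thesis unfolding eigenvalue_def eigenvector_def using wc wnz by auto
qed

end

theorem proposition1:
  fixes n M :: nat and W :: "nat \<Rightarrow> real mat"
  assumes "n \<ge> 2" and "M \<ge> 2"
    and "\<And>t. t \<in> {1..M} \<Longrightarrow> W t \<in> carrier_mat n n"
    and "\<And>t i j. t \<in> {1..M} \<Longrightarrow> i < n \<Longrightarrow> j < n \<Longrightarrow> W t $$ (i, j) \<ge> 0"
    and "\<And>t i. t \<in> {1..M} \<Longrightarrow> i < n \<Longrightarrow> rdeg n (W t) i > 0"
    and "\<And>t i. t \<in> {1..M} \<Longrightarrow> i < n \<Longrightarrow> mu n W t $ i > 0"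
  shows "(\<forall>l. eigenvalue (map_mat complex_of_real (Cmat n M W)) l \<longrightarrow>
             l \<in> \<real> \<and> -1 \<le> Re l \<and> Re l \<le> 1)
       \<and> (\<forall>l. eigenvalue (map_mat complex_of_real (Cmat n M W)) l \<longrightarrow>
             eigenvalue (map_mat complex_of_real (Cmat n M W)) (- l))"
proof -
  interpret P1 n M W using assms by unfold_locales
  have ev: "\<exists>v. v \<in> carrier_vec (n * M) \<and> v \<noteq> 0\<^sub>v (n * M) \<and> Cc *\<^sub>v v = l \<cdot>\<^sub>v v"
    if "eigenvalue Cc l" for l
    using that unfolding eigenvalue_def eigenvector_def by simp
  show ?thesis
  proof (intro conjI allI impI)
    fix l assume "eigenvalue Cc l"
    then obtain v where v: "v \<in> carrier_vec (n * M)" "v \<noteq> 0\<^sub>v (n * M)" "Cc *\<^sub>v v = l \<cdot>\<^sub>v v"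
      using ev by blast
    have i: "Im l = 0" using real_ev[OF v] .
    have c: "cmod l \<le> 1" using abs_ev[OF v] .
    have "\<bar>Re l\<bar> \<le> 1" using c abs_Re_le_cmod order_trans by blast
    then show "l \<in> \<real>" "-1 \<le> Re l" "Re l \<le> 1" using i complex_is_Real_iff by auto
  next
    fix l assume "eigenvalue Cc l"
    then obtain v where v: "v \<in> carrier_vec (n * M)" "v \<noteq> 0\<^sub>v (n * M)" "Cc *\<^sub>v v = l \<cdot>\<^sub>v v"
      using ev by blast
    show "eigenvalue Cc (- l)" using neg_ev[OF v] .
  qed
qed

end
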